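(* Let $(\Omega,\mathcal{F},\mathbf{P})$ be a probability space and $\theta\colon\Omega\to\Omega$ an ergodic automorphism of it. Let $A$ be an $N\times N$ matrix with all entries positive, and let $D(\omega)=\mathrm{diag}(d_1(\omega),\dots,d_N(\omega))$ be measurable in $\omega$ with $d_i(\omega)>0$ for all $i,\omega$ and $\ln^{+}\bigl(\max_i d_i(\cdot)\bigr)\in L_1(\Omega,\mathcal{F},\mathbf{P})$. Put $S(\omega)=AD(\omega)$, $S^{(n)}(\omega)=S(\theta^{n-1}\omega)\cdots S(\theta\omega)S(\omega)$, and let $\lambda$ be the top Lyapunov exponent of $\{S(\omega)\}_{\omega\in\Omega}$. Then there exist $\Omega_0\in\mathcal{F}$ with $\theta(\Omega_0)=\Omega_0$ and $\mathbf{P}(\Omega_0)=1$, a measurable mapping $w=(w_1,\dots,w_N)\colon\Omega_0\to\mathbb{R}^N$ with $w(\omega)$ a positive vector and $\|w(\omega)\|=1$ for all $\omega\in\Omega_0$, and a function $\rho\colon\Omega_0\to(0,\infty)$, such that $S(\omega)w(\omega)=\rho(\omega)w(\theta\omega)$ for all $\omega\in\Omega_0$, and $\lim_{n\to\infty}\frac1n\ln\|S^{(n)}(\omega)w(\omega)\|=\lambda$ for all $\omega\in\Omega_0$.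
   Context: An automorphism $\theta$ is ergodic if every $\theta$-invariant measurable set has probability $0$ or $1$. $\|\cdot\|$ denotes the Euclidean vector or matrix norm. The top Lyapunov exponent of $\{S(\omega)\}$ is the number $\lambda\in[-\infty,\infty)$ such that $\lambda=\lim_{n\to\infty}\frac1n\ln\|S^{(n)}(\omega)\|$ for a.e. $\omega$ (it exists when $\ln^+\|S(\cdot)\|\in L_1$). A vector is positive if all its coordinates are positive. *)

theory Defs
  imports "HOL-Probability.Probability"
begin

definition ergodic_automorphism :: "'a measure \<Rightarrow> ('a \<Rightarrow> 'a) \<Rightarrow> bool" where
  "ergodic_automorphism M T \<longleftrightarrow>
     bij_betw T (space M) (space M) \<and>
     T \<in> measurable M M \<and>
     the_inv_into (space M) T \<in> measurable M M \<and>
     (\<forall>A\<in>sets M. emeasure M (T -` A \<inter> space M) = emeasure M A) \<and>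
     (\<forall>A\<in>sets M. T -` A \<inter> space M = A \<longrightarrow> emeasure M A = 0 \<or> emeasure M A = 1)"

definition diag_mat :: "real ^ 'n \<Rightarrow> real ^ 'n ^ 'n" where
  "diag_mat d = (\<chi> i j. if i = j then d $ i else 0)"

fun cocycle :: "('a \<Rightarrow> 'a) \<Rightarrow> ('a \<Rightarrow> real ^ 'n ^ 'n) \<Rightarrow> nat \<Rightarrow> 'a \<Rightarrow> real ^ 'n ^ 'n" where
  "cocycle T S 0 x = mat 1"
| "cocycle T S (Suc n) x = S ((T ^^ n) x) ** cocycle T S n x"

text \<open>lambda (in [-infinity, infinity)) is the top Lyapunov exponent of the cocycle S over T:
  (1/n) ln ||S^(n)(w)|| tends to lambda for almost every w (norm = Euclidean norm of the matrix).\<close>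
definition top_lyapunov_exponent ::
  "'a measure \<Rightarrow> ('a \<Rightarrow> 'a) \<Rightarrow> ('a \<Rightarrow> real ^ 'n ^ 'n) \<Rightarrow> ereal \<Rightarrow> bool" where
  "top_lyapunov_exponent M T S l \<longleftrightarrow>
     l \<noteq> \<infinity> \<and>
     (AE x in M. (\<lambda>n. ereal (ln (norm (cocycle T S n x)) / real n)) \<longlonglongrightarrow> l)"

end

theory Submission
  imports Defs
begin

lemma mv_diag: "(A ** diag_mat dd) *v y = (\<chi> i. \<Sum>k\<in>UNIV. A$i$k * dd$k * y$k)"
  by (simp add: vec_eq_iff matrix_vector_mult_def matrix_matrix_mult_def diag_mat_def
      if_distrib sum.delta cong: if_cong)

lemma norm_le_cw:
  fixes x y :: "real^'n"
  assumes "\<And>i. \<bar>x$i\<bar> \<le> y$i"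
  shows "norm x \<le> norm y"
  unfolding norm_vec_def
  by (rule L2_set_mono) (use assms in \<open>auto intro: order_trans[OF _ abs_ge_self]\<close>)

lemma step:
  fixes P :: "real^'n^'n" and u x y :: "real^'n"
  assumes a: "a > 0" "a \<le> b"
    and P: "\<forall>i k. a*u$k \<le> P$i$k \<and> P$i$k \<le> b*u$k"
    and u: "\<forall>k. u$k > 0" and x: "\<forall>k. x$k > 0"
    and y: "\<forall>k. m*x$k \<le> y$k \<and> y$k \<le> M*x$k"
  shows "\<exists>m' M'. m \<le> m' \<and> M' \<le> M \<and> M' - m' = (1 - a/b)*(M-m) \<and>
          (\<forall>i. m'*(P*v x)$i \<le> (P*v y)$i \<and> (P*v y)$i \<le> M'*(P*v x)$i)"
proof -
  define X where "X = (\<Sum>k\<in>UNIV. u$k * x$k)"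
  define Y where "Y = (\<Sum>k\<in>UNIV. u$k * y$k)"
  have Xp: "X > 0" unfolding X_def
    by (rule sum_pos) (use u x in auto)
  have "m * X \<le> Y" unfolding X_def Y_def sum_distrib_left
    by (rule sum_mono) (use u y in \<open>auto simp: mult.left_commute intro: mult_left_mono\<close>)
  hence mc: "m \<le> Y/X" using Xp by (simp add: pos_le_divide_eq)
  have "Y \<le> M * X" unfolding X_def Y_def sum_distrib_left
    by (rule sum_mono) (use u y in \<open>auto simp: mult.left_commute intro: mult_left_mono\<close>)
  hence cM: "Y/X \<le> M" using Xp by (simp add: pos_divide_le_eq)
  define k where "k = a/b"
  have k: "0 < k" "k \<le> 1" using a by (auto simp: k_def)
  define c where "c = Y/X"
  have Yc: "Y = c * X" using Xp by (simp add: c_def)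
  show ?thesis
  proof (intro exI conjI allI)
    show "m \<le> m + k*(c - m)" using k mc by (simp add: c_def)
    show "M - k*(M-c) \<le> M" using k cM by (simp add: c_def)
    show "M - k * (M - c) - (m + k * (c - m)) = (1 - a / b) * (M - m)"
      using a by (simp add: k_def field_simps)
  next
    fix i
    have Px: "(P*v x)$i = (\<Sum>k\<in>UNIV. P$i$k * x$k)" by (simp add: matrix_vector_mult_def)
    have Py: "(P*v y)$i = (\<Sum>k\<in>UNIV. P$i$k * y$k)" by (simp add: matrix_vector_mult_def)
    have PxX: "(P*v x)$i \<le> b * X" unfolding Px X_def sum_distrib_left
      by (rule sum_mono) (use P x in \<open>auto simp: mult.assoc intro: mult_right_mono\<close>)
    have L: "a * (Y - m*X) \<le> (P*v y)$i - m * (P*v x)$i"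
    proof -
      have "a * (Y - m*X) = (\<Sum>k\<in>UNIV. a*u$k * (y$k - m*x$k))"
        unfolding X_def Y_def by (simp add: sum_distrib_left algebra_simps sum_subtractf)
      also have "\<dots> \<le> (\<Sum>k\<in>UNIV. P$i$k * (y$k - m*x$k))"
        by (rule sum_mono) (use P y in \<open>auto intro: mult_right_mono\<close>)
      also have "\<dots> = (P*v y)$i - m * (P*v x)$i"
        unfolding Px Py by (simp add: sum_distrib_left algebra_simps sum_subtractf)
      finally show ?thesis .
    qed
    have U: "a * (M*X - Y) \<le> M * (P*v x)$i - (P*v y)$i"
    proof -
      have "a * (M*X - Y) = (\<Sum>k\<in>UNIV. a*u$k * (M*x$k - y$k))"
        unfolding X_def Y_def by (simp add: sum_distrib_left algebra_simps sum_subtractf)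
      also have "\<dots> \<le> (\<Sum>k\<in>UNIV. P$i$k * (M*x$k - y$k))"
        by (rule sum_mono) (use P y in \<open>auto intro: mult_right_mono\<close>)
      also have "\<dots> = M * (P*v x)$i - (P*v y)$i"
        unfolding Px Py by (simp add: sum_distrib_left algebra_simps sum_subtractf)
      finally show ?thesis .
    qed
    have bk: "b * k = a" using a by (simp add: k_def)
    have "k*(c-m)*(P*v x)$i \<le> k*(c-m)*(b*X)"
      using PxX k mc by (intro mult_left_mono) (auto simp: c_def)
    also have "\<dots> = a * (Y - m*X)" using Yc bk by (simp add: algebra_simps)
    finally have "k*(c-m)*(P*v x)$i \<le> (P*v y)$i - m * (P*v x)$i" using L by linarith
    thus "(m + k*(c - m)) * (P*v x)$i \<le> (P*v y)$i" by (simp add: algebra_simps)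
    have "k*(M-c)*(P*v x)$i \<le> k*(M-c)*(b*X)"
      using PxX k cM by (intro mult_left_mono) (auto simp: c_def)
    also have "\<dots> = a * (M*X - Y)" using Yc bk by (simp add: algebra_simps)
    finally have "k*(M-c)*(P*v x)$i \<le> M * (P*v x)$i - (P*v y)$i" using U by linarith
    thus "(P*v y)$i \<le> (M - k*(M-c)) * (P*v x)$i" by (simp add: algebra_simps)
  qed
qed


lemma sgn_close:
  fixes Z W :: "'v::real_normed_vector"
  assumes W: "W \<noteq> 0" and ZW: "norm (Z - W) \<le> e * norm W"
  shows "norm (sgn Z - sgn W) \<le> 2*e"
proof (cases "Z = 0")
  case True
  then have "norm W \<le> e * norm W" using ZW by simp
  then have "1 \<le> e" using W by simp
  then show ?thesis using True W by (simp add: norm_sgn)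
next
  case False
  define nz where "nz = norm Z"
  define nw where "nw = norm W"
  have nz: "nz > 0" using False by (simp add: nz_def)
  have nw: "nw > 0" using W by (simp add: nw_def)
  have eq: "sgn Z - sgn W = (1/nw) *\<^sub>R (Z - W) + (1/nz - 1/nw) *\<^sub>R Z"
    by (simp add: sgn_div_norm nz_def nw_def divide_inverse_commute algebra_simps scaleR_diff_right scaleR_diff_left)
  have "norm (sgn Z - sgn W) \<le> norm ((1/nw) *\<^sub>R (Z - W)) + norm ((1/nz - 1/nw) *\<^sub>R Z)"
    unfolding eq by (rule norm_triangle_ineq)
  also have "norm ((1/nw) *\<^sub>R (Z - W)) = norm (Z - W) / nw" using nw by simp
  also have "norm ((1/nz - 1/nw) *\<^sub>R Z) = \<bar>nw - nz\<bar> / nw"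
  proof -
    have e1: "1/nz - 1/nw = (nw - nz)/(nz*nw)" using nz nw by (simp add: field_simps)
    have "norm ((1/nz - 1/nw) *\<^sub>R Z) = \<bar>1/nz - 1/nw\<bar> * nz" by (simp add: nz_def)
    also have "\<dots> = \<bar>(nw - nz)/(nz*nw)\<bar> * nz" by (simp only: e1)
    also have "\<dots> = \<bar>nw - nz\<bar> / nw" using nz nw by (simp add: abs_divide abs_mult)
    finally show ?thesis .
  qed
  also have "\<bar>nw - nz\<bar> \<le> norm (Z - W)"
    unfolding nw_def nz_def by (metis norm_minus_commute norm_triangle_ineq3)
  then have "\<bar>nw - nz\<bar> / nw \<le> norm (Z - W) / nw" using nw by (simp add: divide_right_mono)
  then have "norm (Z - W) / nw + \<bar>nw - nz\<bar> / nw \<le> 2 * (norm (Z - W) / nw)" by simp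
  also have "norm (Z - W) / nw \<le> e" using ZW nw by (simp add: nw_def pos_divide_le_eq)
  finally show ?thesis by simp
qed

definition posv :: "real^'n \<Rightarrow> bool" where "posv x \<longleftrightarrow> (\<forall>k. x$k > 0)"

locale cone =
  fixes Sm :: "'a \<Rightarrow> real^'n^'n" and R :: "'a \<Rightarrow> 'a" and Om :: "'a set"
    and dd :: "'a \<Rightarrow> real^'n" and a b :: real
  assumes R: "\<And>z. z\<in>Om \<Longrightarrow> R z \<in> Om" and ab: "0 < a" "a \<le> b"
    and Sb: "\<And>z i k. z\<in>Om \<Longrightarrow> a*dd z$k \<le> Sm z$i$k \<and> Sm z$i$k \<le> b*dd z$k"
    and dpos: "\<And>z k. z\<in>Om \<Longrightarrow> dd z$k > 0"
begin

primrec G :: "nat \<Rightarrow> 'a \<Rightarrow> real^'n \<Rightarrow> real^'n" where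
  "G 0 z y = y"
| "G (Suc n) z y = Sm (R z) *v G n (R z) y"

definition one :: "real^'n" where "one = (\<chi> i. 1)"
definition v :: "nat \<Rightarrow> 'a \<Rightarrow> real^'n" where "v n z = G n z one"

lemma Sbounds:
  assumes z: "z \<in> Om" and y: "posv y"
  shows "a * (\<Sum>k\<in>UNIV. dd z$k * y$k) \<le> (Sm z *v y)$i \<and> (Sm z *v y)$i \<le> b * (\<Sum>k\<in>UNIV. dd z$k * y$k)"
proof -
  have e: "(Sm z *v y)$i = (\<Sum>k\<in>UNIV. Sm z$i$k * y$k)" by (simp add: matrix_vector_mult_def)
  show ?thesis unfolding e sum_distrib_left
    using Sb[OF z] y unfolding posv_def
    by (auto intro!: sum_mono simp: mult.assoc[symmetric] intro: mult_right_mono)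
qed

lemma Dpos: "z \<in> Om \<Longrightarrow> posv y \<Longrightarrow> (\<Sum>k\<in>UNIV. dd z$k * y$k) > 0"
  by (rule sum_pos) (auto simp: posv_def dpos)

lemma Spos: "z \<in> Om \<Longrightarrow> posv y \<Longrightarrow> posv (Sm z *v y)"
  unfolding posv_def
proof
  fix i assume z: "z \<in> Om" and "\<forall>k. 0 < y $ k"
  hence y: "posv y" by (simp add: posv_def)
  show "(Sm z *v y)$i > 0"
    using Sbounds[OF z y, of i] Dpos[OF z y] ab by (smt (verit) mult_pos_pos)
qed

lemma Rpow: "z \<in> Om \<Longrightarrow> (R^^n) z \<in> Om"
  by (induction n) (auto intro: R)

lemma G_pos: "z \<in> Om \<Longrightarrow> posv y \<Longrightarrow> posv (G n z y)"
  by (induction n arbitrary: z) (auto intro: Spos R)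

lemma G_add: "G (n+k) z y = G n z (G k ((R^^n) z) y)"
  by (induction n arbitrary: z) (simp_all add: funpow_Suc_right del: funpow.simps)

lemma G_contract:
  assumes "z \<in> Om" "posv x" "\<forall>k. m*x$k \<le> y$k \<and> y$k \<le> M*x$k"
  shows "\<exists>m' M'. m \<le> m' \<and> M' \<le> M \<and> M' - m' = (1-a/b)^n*(M-m) \<and>
     (\<forall>i. m'*G n z x$i \<le> G n z y$i \<and> G n z y$i \<le> M' * G n z x$i)"
  using assms
proof (induction n arbitrary: z)
  case 0
  then show ?case by (intro exI[of _ m] exI[of _ M]) auto
next
  case (Suc n)
  have Rz: "R z \<in> Om" using Suc.prems R by auto
  obtain m1 M1 where h1: "m \<le> m1" "M1 \<le> M" "M1 - m1 = (1-a/b)^n*(M-m)"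
    "\<forall>i. m1*G n (R z) x$i \<le> G n (R z) y$i \<and> G n (R z) y$i \<le> M1 * G n (R z) x$i"
    using Suc.IH[OF Rz Suc.prems(2,3)] by blast
  have px: "\<forall>k. G n (R z) x $ k > 0" using G_pos[OF Rz Suc.prems(2)] by (simp add: posv_def)
  obtain m2 M2 where h2: "m1 \<le> m2" "M2 \<le> M1" "M2 - m2 = (1-a/b)*(M1-m1)"
    "\<forall>i. m2*(Sm (R z) *v G n (R z) x)$i \<le> (Sm (R z) *v G n (R z) y)$i \<and>
        (Sm (R z) *v G n (R z) y)$i \<le> M2*(Sm (R z) *v G n (R z) x)$i"
    using step[OF ab, of "dd (R z)" "Sm (R z)" "G n (R z) x" m1 "G n (R z) y" M1] Sb[OF Rz] dpos[OF Rz] px h1(4)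
    by blast
  show ?case
    by (intro exI[of _ m2] exI[of _ M2]) (use h1 h2 in auto)
qed

lemma ratio1:
  assumes z: "z \<in> Om" and x: "posv x" and y: "posv y"
  defines "c \<equiv> (\<Sum>k\<in>UNIV. dd z$k * y$k) / (\<Sum>k\<in>UNIV. dd z$k * x$k)"
  shows "c > 0" "(a/b)*c*(Sm z *v x)$i \<le> (Sm z *v y)$i" "(Sm z *v y)$i \<le> (c/(a/b))*(Sm z *v x)$i"
proof -
  define X where "X = (\<Sum>k\<in>UNIV. dd z$k * x$k)"
  define Y where "Y = (\<Sum>k\<in>UNIV. dd z$k * y$k)"
  have X: "X > 0" "Y > 0" using Dpos[OF z x] Dpos[OF z y] by (simp_all add: X_def Y_def)
  have c: "c = Y/X" by (simp add: c_def X_def Y_def)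
  show "c > 0" using X c by simp
  have bx: "a*X \<le> (Sm z *v x)$i" "(Sm z *v x)$i \<le> b*X" using Sbounds[OF z x, of i] by (auto simp: X_def)
  have by': "a*Y \<le> (Sm z *v y)$i" "(Sm z *v y)$i \<le> b*Y" using Sbounds[OF z y, of i] by (auto simp: Y_def)
  have bp: "b > 0" using ab by simp
  have "(a/b)*c*(Sm z *v x)$i \<le> (a/b)*c*(b*X)"
    using bx X ab c by (intro mult_left_mono) auto
  also have "\<dots> = a*Y" using X bp by (simp add: c)
  finally show "(a/b)*c*(Sm z *v x)$i \<le> (Sm z *v y)$i" using by' by linarith
  have "b*Y = (c/(a/b)) * (a*X)" using X bp ab by (simp add: c field_simps)
  also have "\<dots> \<le> (c/(a/b))*(Sm z *v x)$i"
    using bx X ab c bp by (intro mult_left_mono) auto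
  finally show "(Sm z *v y)$i \<le> (c/(a/b))*(Sm z *v x)$i" using by' by linarith
qed

lemma one_pos: "posv one" by (simp add: posv_def one_def)

lemma v_Suc: "v (Suc n) z = Sm (R z) *v v n (R z)" by (simp add: v_def)

lemma v_pos: "z \<in> Om \<Longrightarrow> posv (v n z)" unfolding v_def by (rule G_pos) (auto simp: one_pos)

lemma posv_nz: "posv x \<Longrightarrow> x \<noteq> 0"
  by (auto simp: posv_def)

definition K :: real where "K = 1/(a/b)^2 - 1"

lemma K_nonneg: "K \<ge> 0"
proof -
  have "0 < a/b" "a/b \<le> 1" using ab by auto
  then have "(a/b)^2 \<le> 1" by (simp add: power_le_one)
  then show ?thesis using \<open>0 < a/b\<close> ab by (simp add: K_def le_divide_eq)
qed

lemma cauchy_est: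
  assumes z: "z \<in> Om" and q: "q = Suc r" and p: "q \<le> p"
  shows "norm (sgn (v p z) - sgn (v q z)) \<le> 2*((1-a/b)^r*K)"
proof -
  define z' where "z' = (R^^r) z"
  have z': "z' \<in> Om" "R z' \<in> Om" using Rpow[OF z] R by (auto simp: z'_def)
  define y0 where "y0 = G (p-q) (R z') one"
  have y0: "posv y0" unfolding y0_def by (rule G_pos[OF z'(2) one_pos])
  define x where "x = Sm (R z') *v one"
  define y where "y = Sm (R z') *v y0"
  have vp: "v p z = G r z y"
  proof -
    have "p = r + Suc (p-q)" using p q by simp
    then have "v p z = G r z (G (Suc (p-q)) z' one)" unfolding v_def z'_def by (metis G_add)
    then show ?thesis by (simp add: y_def y0_def)
  qed
  have vq: "v q z = G r z x"
  proof -
    have "v q z = G r z (G 1 z' one)" unfolding v_def z'_def q by (metis G_add Suc_eq_plus1)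
    then show ?thesis by (simp add: x_def)
  qed
  define c where "c \<equiv> (\<Sum>k\<in>UNIV. dd (R z')$k * y0$k) / (\<Sum>k\<in>UNIV. dd (R z')$k * one$k)"
  have c: "c > 0" and cb: "\<And>i. (a/b)*c*x$i \<le> y$i" "\<And>i. y$i \<le> (c/(a/b))*x$i"
    using ratio1[OF z'(2) one_pos y0] unfolding c_def x_def y_def by auto
  have xp: "posv x" unfolding x_def by (rule Spos[OF z'(2) one_pos])
  obtain m' M' where mM: "(a/b)*c \<le> m'" "M' \<le> c/(a/b)"
     "M' - m' = (1-a/b)^r*(c/(a/b) - (a/b)*c)"
     "\<forall>i. m'*G r z x$i \<le> G r z y$i \<and> G r z y$i \<le> M' * G r z x$i"
    using G_contract[OF z xp, of "(a/b)*c" y "c/(a/b)" r] cb by blast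
  have kp: "0 < a/b" "a/b \<le> 1" using ab by auto
  have m'p: "m' > 0" using mM(1) kp c by (smt (verit) mult_pos_pos)
  have "a \<noteq> 0" "b \<noteq> 0" using ab by auto
  then have diff: "c/(a/b) - (a/b)*c = K * ((a/b)*c)" by (simp add: K_def field_simps power2_eq_square)
  define eps where "eps = (1-a/b)^r*K"
  have eps: "eps \<ge> 0" unfolding eps_def using kp K_nonneg by simp
  have "K*((a/b)*c) \<le> K*m'" using mM(1) K_nonneg by (rule mult_left_mono)
  then have "(1-a/b)^r * (K*((a/b)*c)) \<le> (1-a/b)^r*(K*m')" by (rule mult_left_mono) (use kp in auto)
  then have MM: "M' - m' \<le> eps * m'"
    unfolding mM(3) diff eps_def by (simp add: mult.assoc)
  have Mm0: "M' - m' \<ge> 0" unfolding mM(3) diff using kp K_nonneg c by (intro mult_nonneg_nonneg) auto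
  define X' where "X' = G r z x"
  have X'p: "posv X'" unfolding X'_def by (rule G_pos[OF z xp])
  have "norm (G r z y - m' *\<^sub>R X') \<le> norm ((M'-m') *\<^sub>R X')"
  proof (rule norm_le_cw)
    fix i
    show "\<bar>(G r z y - m' *\<^sub>R X') $ i\<bar> \<le> ((M' - m') *\<^sub>R X') $ i"
      using mM(4)[rule_format, of i] by (simp add: X'_def algebra_simps)
  qed
  also have "\<dots> = (M'-m') * norm X'" using Mm0 by simp
  also have "\<dots> \<le> eps * m' * norm X'" using MM by (simp add: mult_right_mono)
  also have "\<dots> = eps * norm (m' *\<^sub>R X')" using m'p by simp
  finally have "norm (sgn (G r z y) - sgn (m' *\<^sub>R X')) \<le> 2*eps"
    by (intro sgn_close) (use m'p posv_nz[OF X'p] in auto)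
  moreover have "sgn (m' *\<^sub>R X') = sgn X'" using m'p by (simp add: sgn_scaleR)
  ultimately show ?thesis by (simp add: vp vq X'_def eps_def)
qed

lemma v_cauchy: assumes z: "z \<in> Om" shows "Cauchy (\<lambda>n. sgn (v n z))"
proof (rule metric_CauchyI)
  fix e :: real assume e: "e > 0"
  have kp: "0 < a/b" "a/b \<le> 1" using ab by auto
  have "norm (1 - a/b) < (1::real)" using kp by (simp add: abs_if)
  then have p0: "(\<lambda>n. (1-a/b)^n) \<longlonglongrightarrow> 0" by (rule LIMSEQ_power_zero)
  have "(\<lambda>n. 2*((1-a/b)^n*K)) \<longlonglongrightarrow> 2*(0*K)"
    using tendsto_mult_left[OF tendsto_mult_right[OF p0, of K], of 2] by simp
  then have "eventually (\<lambda>n. 2*((1-a/b)^n*K) < e) sequentially"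
    using e by (intro order_tendstoD(2)) auto
  then obtain N where N: "\<And>n. n \<ge> N \<Longrightarrow> 2*((1-a/b)^n*K) < e"
    by (auto simp: eventually_sequentially)
  show "\<exists>M. \<forall>m\<ge>M. \<forall>n\<ge>M. dist (sgn (v m z)) (sgn (v n z)) < e"
  proof (intro exI[of _ "Suc N"] allI impI)
    fix m n assume m: "m \<ge> Suc N" and n: "n \<ge> Suc N"
    show "dist (sgn (v m z)) (sgn (v n z)) < e"
    proof (cases "n \<le> m")
      case True
      obtain r where r: "n = Suc r" using n by (cases n) auto
      have "dist (sgn (v m z)) (sgn (v n z)) \<le> 2*((1-a/b)^r*K)"
        unfolding dist_norm by (rule cauchy_est[OF z r True])
      also have "\<dots> < e" using N[of r] r n by simp
      finally show ?thesis .
    next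
      case False
      obtain r where r: "m = Suc r" using m by (cases m) auto
      have "norm (sgn (v n z) - sgn (v m z)) \<le> 2*((1-a/b)^r*K)"
        by (rule cauchy_est[OF z r]) (use False in auto)
      then have "dist (sgn (v m z)) (sgn (v n z)) \<le> 2*((1-a/b)^r*K)"
        by (simp add: dist_norm norm_minus_commute)
      also have "\<dots> < e" using N[of r] r m by simp
      finally show ?thesis .
    qed
  qed
qed

definition w :: "'a \<Rightarrow> real^'n" where "w z = lim (\<lambda>n. sgn (v n z))"

lemma w_lim: "z \<in> Om \<Longrightarrow> (\<lambda>n. sgn (v n z)) \<longlonglongrightarrow> w z"
  unfolding w_def using v_cauchy Cauchy_convergent_iff convergent_LIMSEQ_iff by blast

lemma w_norm: assumes z: "z \<in> Om" shows "norm (w z) = 1"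
proof -
  have "(\<lambda>n. norm (sgn (v n z))) \<longlonglongrightarrow> norm (w z)" by (intro tendsto_intros w_lim z)
  moreover have "(\<lambda>n. norm (sgn (v n z))) = (\<lambda>n. 1)"
    using posv_nz[OF v_pos[OF z]] by (simp add: norm_sgn)
  ultimately show ?thesis using LIMSEQ_unique tendsto_const by metis
qed

definition c1 :: real where "c1 = norm (one::real^'n)"

lemma c1_pos: "c1 > 0" unfolding c1_def using posv_nz[OF one_pos] by simp

lemma sgn_v_lower:
  assumes z: "z \<in> Om" shows "(a/b)/c1 \<le> sgn (v (Suc n) z) $ i"
proof -
  define y where "y = v n (R z)"
  have Rz: "R z \<in> Om" using R z by auto
  have y: "posv y" unfolding y_def by (rule v_pos[OF Rz])
  define D where "D = (\<Sum>k\<in>UNIV. dd (R z)$k * y$k)"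
  have D: "D > 0" unfolding D_def by (rule Dpos[OF Rz y])
  have vs: "v (Suc n) z = Sm (R z) *v y" by (simp add: v_Suc y_def)
  have bnd: "\<And>j. a*D \<le> (Sm (R z) *v y)$j \<and> (Sm (R z) *v y)$j \<le> b*D"
    using Sbounds[OF Rz y] by (simp add: D_def)
  have nv: "norm (Sm (R z) *v y) \<le> norm ((b*D) *\<^sub>R one)"
  proof (rule norm_le_cw)
    fix j
    have "0 < a*D" using ab D by simp
    then show "\<bar>(Sm (R z) *v y) $ j\<bar> \<le> ((b * D) *\<^sub>R one) $ j"
      using bnd[of j] by (auto simp: one_def abs_le_iff)
  qed
  also have "\<dots> = b*D*c1" using ab D by (simp add: c1_def)
  finally have nv: "norm (Sm (R z) *v y) \<le> b*D*c1" .
  have np: "norm (Sm (R z) *v y) > 0" using posv_nz[OF Spos[OF Rz y]] by simp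
  have "(a/b)/c1 = (a*D)/(b*D*c1)" using D ab c1_pos by (simp add: field_simps)
  also have "\<dots> \<le> (a*D)/norm (Sm (R z) *v y)"
    using np nv ab D c1_pos by (intro divide_left_mono) (auto intro!: mult_pos_pos)
  also have "\<dots> \<le> (Sm (R z) *v y)$i / norm (Sm (R z) *v y)"
    using np bnd[of i] by (intro divide_right_mono) auto
  finally show ?thesis by (simp add: vs sgn_div_norm divide_inverse_commute)
qed

lemma w_lower: assumes z: "z \<in> Om" shows "(a/b)/c1 \<le> w z $ i"
proof (rule LIMSEQ_le_const)
  show "(\<lambda>n. sgn (v n z) $ i) \<longlonglongrightarrow> w z $ i" by (intro tendsto_intros w_lim z)
  show "\<exists>N. \<forall>n\<ge>N. (a/b)/c1 \<le> sgn (v n z) $ i"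
  proof (intro exI[of _ 1] allI impI)
    fix n :: nat assume "n \<ge> 1"
    then obtain m where "n = Suc m" by (cases n) auto
    then show "(a/b)/c1 \<le> sgn (v n z) $ i" using sgn_v_lower[OF z] by simp
  qed
qed

lemma w_eq:
  assumes y: "y \<in> Om" and Ry: "R y \<in> Om"
  shows "w y = sgn (Sm (R y) *v w (R y))"
proof -
  have "(\<lambda>n. sgn (v (Suc n) y)) \<longlonglongrightarrow> w y" using w_lim[OF y] by (rule LIMSEQ_Suc)
  moreover have "(\<lambda>n. sgn (v (Suc n) y)) = (\<lambda>n. sgn (Sm (R y) *v sgn (v n (R y))))"
  proof
    fix n
    have nz: "norm (v n (R y)) > 0" using posv_nz[OF v_pos[OF Ry]] by simp
    have "v n (R y) = norm (v n (R y)) *\<^sub>R sgn (v n (R y))" using nz by (simp add: sgn_div_norm)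
    then have "Sm (R y) *v v n (R y) = norm (v n (R y)) *\<^sub>R (Sm (R y) *v sgn (v n (R y)))"
      by (metis matrix_vector_mult_scaleR)
    then show "sgn (v (Suc n) y) = sgn (Sm (R y) *v sgn (v n (R y)))"
      using nz by (simp add: v_Suc sgn_scaleR)
  qed
  moreover have "(\<lambda>n. sgn (Sm (R y) *v sgn (v n (R y)))) \<longlonglongrightarrow> sgn (Sm (R y) *v w (R y))"
  proof (rule tendsto_sgn)
    show "(\<lambda>n. Sm (R y) *v sgn (v n (R y))) \<longlonglongrightarrow> Sm (R y) *v w (R y)"
      by (rule bounded_linear.tendsto[OF matrix_vector_mul_bounded_linear w_lim[OF Ry]])
    have "posv (w (R y))" unfolding posv_def
      using w_lower[OF Ry] ab c1_pos by (smt (verit) divide_pos_pos)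
    then show "Sm (R y) *v w (R y) \<noteq> 0" using posv_nz Spos R Ry by blast
  qed
  ultimately show ?thesis using LIMSEQ_unique by metis
qed

end


lemma ereal_bdiff:
  fixes f g :: "nat \<Rightarrow> real"
  assumes lim: "(\<lambda>n. ereal (f n / real n)) \<longlonglongrightarrow> l" and b: "\<And>n. \<bar>g n - f n\<bar> \<le> C"
  shows "(\<lambda>n. ereal (g n / real n)) \<longlonglongrightarrow> l"
proof -
  have r: "(\<lambda>n. (g n - f n) / real n) \<longlonglongrightarrow> 0"
  proof (rule tendsto_sandwich[of "\<lambda>n. - (C / real n)" _ _ "\<lambda>n. C / real n"])
    show "\<forall>\<^sub>F n in sequentially. - (C / real n) \<le> (g n - f n) / real n"
    proof (intro always_eventually allI)
      fix n
      have "-C \<le> g n - f n" using b[of n] by (simp add: abs_le_iff)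
      then have "(-C)/real n \<le> (g n - f n)/real n" by (rule divide_right_mono) simp
      then show "- (C / real n) \<le> (g n - f n) / real n" by simp
    qed
    show "\<forall>\<^sub>F n in sequentially. (g n - f n) / real n \<le> C / real n"
      using b by (auto intro!: always_eventually simp: abs_le_iff intro: divide_right_mono)
    show "(\<lambda>n. - (C / real n)) \<longlonglongrightarrow> 0" using tendsto_minus[OF lim_const_over_n[of C]] by simp
    show "(\<lambda>n. C / real n) \<longlonglongrightarrow> 0" by (rule lim_const_over_n)
  qed
  have "(\<lambda>n. ereal (f n / real n) + ereal ((g n - f n) / real n)) \<longlonglongrightarrow> l + ereal 0"
    by (rule tendsto_add_ereal_general) (use lim r in \<open>auto intro: tendsto_ereal\<close>)
  moreover have "\<And>n. ereal (f n / real n) + ereal ((g n - f n) / real n) = ereal (g n / real n)"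
    by (simp add: diff_divide_distrib)
  ultimately show ?thesis by simp
qed

lemma ereal_shift1:
  fixes f :: "nat \<Rightarrow> real"
  shows "(\<lambda>n. ereal (f n / real n)) \<longlonglongrightarrow> l \<longleftrightarrow> (\<lambda>n. ereal (f n / real (Suc n))) \<longlonglongrightarrow> l"
proof
  assume h: "(\<lambda>n. ereal (f n / real n)) \<longlonglongrightarrow> l"
  have "(\<lambda>n. ereal (f n / real n) * ereal (real n / real (Suc n))) \<longlonglongrightarrow> l * ereal 1"
    by (rule tendsto_mult_ereal[OF h]) (use tendsto_ereal[OF LIMSEQ_n_over_Suc_n[where 'a=real]] in auto)
  moreover have "eventually (\<lambda>n. ereal (f n / real n) * ereal (real n / real (Suc n)) = ereal (f n / real (Suc n))) sequentially"
    using eventually_gt_at_top[of 0] by eventually_elim simp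
  ultimately show "(\<lambda>n. ereal (f n / real (Suc n))) \<longlonglongrightarrow> l" using tendsto_cong by fastforce
next
  assume h: "(\<lambda>n. ereal (f n / real (Suc n))) \<longlonglongrightarrow> l"
  have "(\<lambda>n. ereal (f n / real (Suc n)) * ereal (real (Suc n) / real n)) \<longlonglongrightarrow> l * ereal 1"
    by (rule tendsto_mult_ereal[OF h]) (use tendsto_ereal[OF LIMSEQ_Suc_n_over_n[where 'a=real]] in auto)
  moreover have "eventually (\<lambda>n. ereal (f n / real (Suc n)) * ereal (real (Suc n) / real n) = ereal (f n / real n)) sequentially"
    using eventually_gt_at_top[of 0] by eventually_elim simp
  ultimately show "(\<lambda>n. ereal (f n / real n)) \<longlonglongrightarrow> l" using tendsto_cong by fastforce
qed

lemma mnorm_bounds: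
  fixes C :: "real^'n^'n" and u :: "real^'n"
  assumes C: "\<forall>i k. C$i$k \<ge> 0" and u: "\<forall>k. c0 \<le> u$k" "\<forall>k. u$k \<le> 1" and c0: "c0 > 0"
  shows "c0 * norm C \<le> norm (C *v u)" "norm (C *v u) \<le> real CARD('n) * real CARD('n) * norm C"
proof -
  define rs where "rs i = (\<Sum>k\<in>UNIV. C$i$k)" for i
  have Cu: "(C *v u)$i = (\<Sum>k\<in>UNIV. C$i$k * u$k)" for i by (simp add: matrix_vector_mult_def)
  have "norm C \<le> norm (\<chi> i. rs i)"
    unfolding norm_vec_def[of C] norm_vec_def[of "\<chi> i. rs i"]
  proof (rule L2_set_mono)
    fix i assume "i \<in> (UNIV::'n set)"
    have "norm (C$i) \<le> (\<Sum>k\<in>UNIV. \<bar>C$i$k\<bar>)" by (rule norm_le_l1_cart)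
    also have "\<dots> = rs i" using C by (simp add: rs_def)
    also have "\<dots> \<le> norm ((\<chi> i. rs i) $ i)" by simp
    finally show "norm (C$i) \<le> norm ((\<chi> i. rs i) $ i)" .
  qed simp
  then have "c0 * norm C \<le> norm (c0 *\<^sub>R (\<chi> i. rs i))" using c0 by simp
  also have "\<dots> \<le> norm (C *v u)"
  proof (rule norm_le_cw)
    fix i
    have "c0 * rs i = (\<Sum>k\<in>UNIV. C$i$k * c0)" by (simp add: rs_def sum_distrib_left mult.commute)
    also have "\<dots> \<le> (C *v u)$i" unfolding Cu by (rule sum_mono) (use C u in \<open>auto intro: mult_left_mono\<close>)
    finally have "c0 * rs i \<le> (C *v u)$i" .
    moreover have "rs i \<ge> 0" unfolding rs_def using C by (simp add: sum_nonneg)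
    ultimately show "\<bar>(c0 *\<^sub>R (\<chi> i. rs i)) $ i\<bar> \<le> (C *v u) $ i" using c0 by simp
  qed
  finally show "c0 * norm C \<le> norm (C *v u)" .
  have "norm (C *v u) \<le> (\<Sum>i\<in>UNIV. \<bar>(C *v u)$i\<bar>)" by (rule norm_le_l1_cart)
  also have "\<dots> \<le> (\<Sum>i\<in>(UNIV::'n set). real CARD('n) * norm C)"
  proof (rule sum_mono)
    fix i
    have "\<bar>(C *v u)$i\<bar> \<le> (\<Sum>k\<in>UNIV. \<bar>C$i$k * u$k\<bar>)" unfolding Cu by (rule sum_abs)
    also have "\<dots> \<le> (\<Sum>k\<in>(UNIV::'n set). norm C)"
    proof (rule sum_mono)
      fix k
      have "\<bar>C$i$k * u$k\<bar> \<le> \<bar>C$i$k\<bar>" proof -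
        have "\<bar>u$k\<bar> \<le> 1" using u[rule_format, of k] c0 by simp
        then show ?thesis by (simp add: abs_mult mult_left_le)
      qed
      also have "\<dots> \<le> norm (C$i)" by (rule component_le_norm_cart)
      also have "\<dots> \<le> norm C" by (rule Finite_Cartesian_Product.norm_nth_le)
      finally show "\<bar>C$i$k * u$k\<bar> \<le> norm C" .
    qed
    finally show "\<bar>(C *v u)$i\<bar> \<le> real CARD('n) * norm C" by simp
  qed
  finally show "norm (C *v u) \<le> real CARD('n) * real CARD('n) * norm C" by (simp add: mult.assoc)
qed


lemma vec_meas_iff:
  fixes f :: "'a \<Rightarrow> real^'n"
  shows "f \<in> borel_measurable M \<longleftrightarrow> (\<forall>i. (\<lambda>x. f x $ i) \<in> borel_measurable M)"
  unfolding borel_measurable_euclidean_space[of f]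
  by (auto simp: Basis_vec_def cart_eq_inner_axis)

lemma funpow_meas: "T \<in> measurable M M \<Longrightarrow> (T^^n) \<in> measurable M M"
  by (induction n) (auto intro: measurable_comp)

lemma mm_diag: "(A ** diag_mat dd) $ i $ k = A$i$k * dd$k"
  by (simp add: matrix_matrix_mult_def diag_mat_def if_distrib sum.delta cong: if_cong)

lemma mv_meas:
  fixes A :: "real^'n^'n"
  assumes d: "(\<lambda>x. dd x) \<in> borel_measurable M" and y: "(\<lambda>x. y x) \<in> borel_measurable M"
  shows "(\<lambda>x. (A ** diag_mat (dd x)) *v y x) \<in> borel_measurable M"
proof -
  have dk: "(\<lambda>x. dd x $ k) \<in> borel_measurable M" for k using d vec_meas_iff by blast
  have yk: "(\<lambda>x. y x $ k) \<in> borel_measurable M" for k using y vec_meas_iff by blast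
  show ?thesis unfolding mv_diag vec_meas_iff
    using dk yk by auto
qed

lemma coc_Suc': "cocycle T S (Suc n) x = cocycle T S n (T x) ** S x"
proof (induction n)
  case 0 then show ?case by (simp add: matrix_mul_rid matrix_mul_lid)
next
  case (Suc n)
  have "cocycle T S (Suc (Suc n)) x = S ((T^^n) (T x)) ** cocycle T S (Suc n) x"
    by (simp add: funpow_Suc_right del: funpow.simps)
  also have "\<dots> = (S ((T^^n) (T x)) ** cocycle T S n (T x)) ** S x"
    by (subst Suc.IH) (simp add: matrix_mul_assoc)
  finally show ?case by simp
qed

theorem proposition3p1:
  fixes M :: "'a measure" and T :: "'a \<Rightarrow> 'a"
    and A :: "real ^ 'n ^ 'n" and d :: "'a \<Rightarrow> real ^ 'n"
    and l :: ereal
  assumes "prob_space M"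
    and "ergodic_automorphism M T"
    and "\<forall>i j. A $ i $ j > 0"
    and "d \<in> borel_measurable M"
    and "\<forall>x\<in>space M. \<forall>i. d x $ i > 0"
    and "integrable M (\<lambda>x. max 0 (ln (Max (range (\<lambda>i. d x $ i)))))"
    and "top_lyapunov_exponent M T (\<lambda>x. A ** diag_mat (d x)) l"
  shows "\<exists>\<Omega>0 w \<rho>.
           \<Omega>0 \<in> sets M \<and> T ` \<Omega>0 = \<Omega>0 \<and> measure M \<Omega>0 = 1 \<and>
           w \<in> borel_measurable (restrict_space M \<Omega>0) \<and>
           (\<forall>x\<in>\<Omega>0. (\<forall>i. w x $ i > 0) \<and> norm (w x) = 1) \<and>
           (\<forall>x\<in>\<Omega>0. \<rho> x > (0::real)) \<and>
           (\<forall>x\<in>\<Omega>0. (A ** diag_mat (d x)) *v w x = \<rho> x *\<^sub>R w (T x)) \<and>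
           (\<forall>x\<in>\<Omega>0. (\<lambda>n. ereal (ln (norm (cocycle T (\<lambda>y. A ** diag_mat (d y)) n x *v w x)) / real n))
                        \<longlonglongrightarrow> l)"
proof -
  interpret P: prob_space M by (rule assms(1))
  define S where "S = (\<lambda>x. A ** diag_mat (d x))"
  have bij: "bij_betw T (space M) (space M)" and Tm: "T \<in> measurable M M"
    and Rm: "the_inv_into (space M) T \<in> measurable M M"
    using assms(2) unfolding ergodic_automorphism_def by auto
  define R where "R = the_inv_into (space M) T"
  have Rm': "R \<in> measurable M M" using Rm by (simp add: R_def)
  have Tsp: "\<And>x. x \<in> space M \<Longrightarrow> T x \<in> space M" using measurable_space[OF Tm] by blast
  have Rsp: "\<And>x. x \<in> space M \<Longrightarrow> R x \<in> space M" using measurable_space[OF Rm'] by blast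
  have RT: "\<And>x. x \<in> space M \<Longrightarrow> R (T x) = x"
    unfolding R_def using bij_betw_imp_inj_on[OF bij] by (rule the_inv_into_f_f)
  define a where "a = Min (range (\<lambda>p::'n\<times>'n. A $ fst p $ snd p))"
  define b where "b = Max (range (\<lambda>p::'n\<times>'n. A $ fst p $ snd p))"
  have fin: "finite (range (\<lambda>p::'n\<times>'n. A $ fst p $ snd p))" by simp
  have abA: "a \<le> A$i$k \<and> A$i$k \<le> b" for i k
  proof -
    have "A$i$k \<in> range (\<lambda>p::'n\<times>'n. A $ fst p $ snd p)" by (rule range_eqI[of _ _ "(i,k)"]) simp
    then show ?thesis unfolding a_def b_def using fin by auto
  qed
  have a0: "a > 0"
  proof -
    have "a \<in> range (\<lambda>p::'n\<times>'n. A $ fst p $ snd p)" unfolding a_def using fin by (intro Min_in) auto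
    then show ?thesis using assms(3) by auto
  qed
  have ab: "a \<le> b" using abA by (meson order_trans)
  interpret C: cone S R "space M" d a b
  proof
    show "\<And>z. z \<in> space M \<Longrightarrow> R z \<in> space M" by (rule Rsp)
    show "0 < a" "a \<le> b" by (fact a0, fact ab)
    show "\<And>z k. z \<in> space M \<Longrightarrow> 0 < d z $ k" using assms(5) by auto
    fix z i k assume z: "z \<in> space M"
    have dp: "d z $ k > 0" using assms(5) z by auto
    show "a * d z $ k \<le> S z $ i $ k \<and> S z $ i $ k \<le> b * d z $ k"
      unfolding S_def mm_diag using abA[of i k] dp by (auto intro: mult_right_mono)
  qed
  define w where "w = C.w"
  define \<rho> where "\<rho> x = norm (S x *v w x)" for x
  define c0 where "c0 = (a/b)/C.c1"
  have c0: "c0 > 0" unfolding c0_def using a0 ab C.c1_pos by simp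
  have wlow: "\<And>x i. x \<in> space M \<Longrightarrow> c0 \<le> w x $ i" unfolding w_def c0_def by (rule C.w_lower)
  have wn: "\<And>x. x \<in> space M \<Longrightarrow> norm (w x) = 1" unfolding w_def by (rule C.w_norm)
  have wle: "\<And>x i. x \<in> space M \<Longrightarrow> w x $ i \<le> 1"
    using wn component_le_norm_cart by (metis abs_le_D1)
  have wposv: "\<And>x. x \<in> space M \<Longrightarrow> posv (w x)" unfolding posv_def using wlow c0 by (meson less_le_trans)
  have rho: "\<rho> x > 0" "S x *v w x = \<rho> x *\<^sub>R w (T x)" if x: "x \<in> space M" for x
  proof -
    have nz: "S x *v w x \<noteq> 0" using C.posv_nz[OF C.Spos[OF x wposv[OF x]]] .
    then show "\<rho> x > 0" by (simp add: \<rho>_def)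
    have "w (T x) = sgn (S (R (T x)) *v w (R (T x)))"
      unfolding w_def by (rule C.w_eq) (use Tsp x RT in auto)
    then have "w (T x) = sgn (S x *v w x)" using RT x by simp
    then show "S x *v w x = \<rho> x *\<^sub>R w (T x)" using nz by (simp add: \<rho>_def sgn_div_norm)
  qed
  have dm: "(\<lambda>x. d x) \<in> borel_measurable M" using assms(4) by simp
  have vm: "C.v n \<in> borel_measurable M" for n
  proof (induction n)
    case 0
    have "C.v 0 = (\<lambda>z. C.one)" by (simp add: C.v_def fun_eq_iff)
    then show ?case by simp
  next
    case (Suc n)
    have e: "C.v (Suc n) = (\<lambda>z. A ** diag_mat (d (R z)) *v C.v n (R z))"
      by (rule ext, subst C.v_Suc, simp add: S_def)
    show ?case unfolding e
      by (rule mv_meas) (use measurable_comp[OF Rm' dm] measurable_comp[OF Rm' Suc] in \<open>auto simp: comp_def\<close>)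
  qed
  have wm: "w \<in> borel_measurable M"
  proof (rule borel_measurable_LIMSEQ_metric)
    show "(\<lambda>z. sgn (C.v i z)) \<in> borel_measurable M" for i
      using measurable_comp[OF vm borel_measurable_sgn] by (simp add: comp_def)
    show "\<And>x. x \<in> space M \<Longrightarrow> (\<lambda>i. sgn (C.v i x)) \<longlonglongrightarrow> w x" unfolding w_def by (rule C.w_lim)
  qed
  have um: "(\<lambda>x. cocycle T S n x *v w x) \<in> borel_measurable M" for n
  proof (induction n)
    case 0 then show ?case using wm by (simp add: matrix_vector_mul_lid)
  next
    case (Suc n)
    have e: "(\<lambda>x. cocycle T S (Suc n) x *v w x) = (\<lambda>x. A ** diag_mat (d ((T^^n) x)) *v (cocycle T S n x *v w x))"
      by (simp add: fun_eq_iff S_def matrix_vector_mul_assoc del: funpow.simps)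
    show ?case unfolding e
      by (rule mv_meas) (use measurable_comp[OF funpow_meas[OF Tm] dm] Suc in \<open>auto simp: comp_def\<close>)
  qed
  define g where "g x n = ln (norm (cocycle T S n x *v w x))" for x n
  define H where "H = {x\<in>space M. (\<lambda>n. ereal (g x n / real n)) \<longlonglongrightarrow> l}"
  have gm: "(\<lambda>x. ereal (g x n / real n)) \<in> borel_measurable M" for n
    unfolding g_def using um[of n] by measurable
  have Hs: "H \<in> sets M"
  proof -
    have "H = {x\<in>space M. liminf (\<lambda>n. ereal (g x n / real n)) = l \<and> limsup (\<lambda>n. ereal (g x n / real n)) = l}"
      unfolding H_def by (simp add: tendsto_iff_Liminf_eq_Limsup)
    also have "\<dots> \<in> sets M"
    proof -
      have [measurable]: "(\<lambda>x. liminf (\<lambda>n. ereal (g x n / real n))) \<in> borel_measurable M"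
        by (rule borel_measurable_liminf[OF gm])
      have [measurable]: "(\<lambda>x. limsup (\<lambda>n. ereal (g x n / real n))) \<in> borel_measurable M"
        by (rule borel_measurable_limsup[OF gm])
      show ?thesis by measurable
    qed
    finally show ?thesis .
  qed
  have cnn: "\<forall>i k. 0 \<le> cocycle T S n x $ i $ k" if x: "x \<in> space M" for n x
  proof (induction n)
    case 0 show ?case by (simp add: mat_def)
  next
    case (Suc n)
    have z: "(T^^n) x \<in> space M" using measurable_space[OF funpow_meas[OF Tm] x] .
    have "0 \<le> S ((T^^n) x) $ i $ k" for i k unfolding S_def mm_diag
      using assms(3) assms(5) z by (auto intro!: mult_nonneg_nonneg less_imp_le)
    then show ?case using Suc by (auto simp: matrix_matrix_mult_def intro!: sum_nonneg)
  qed
  define NN where "NN = real CARD('n) * real CARD('n)"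
  have "0 < CARD('n)" by simp
  then have cn: "real CARD('n) \<ge> 1" by simp
  have NN: "NN \<ge> 1" unfolding NN_def using mult_mono[OF cn cn] by simp
  have gbound: "\<bar>g x n - ln (norm (cocycle T S n x))\<bar> \<le> \<bar>ln c0\<bar> + \<bar>ln NN\<bar>" if x: "x \<in> space M" for n x
  proof -
    define Cn where "Cn = cocycle T S n x"
    have b1: "c0 * norm Cn \<le> norm (Cn *v w x)" and b2: "norm (Cn *v w x) \<le> NN * norm Cn"
      using mnorm_bounds[OF cnn[OF x, of n] _ _ c0, of "w x"] wlow[OF x] wle[OF x]
      unfolding Cn_def NN_def by auto
    show ?thesis
    proof (cases "norm Cn = 0")
      case True
      then have "norm (Cn *v w x) = 0" using b2 by (metis mult_zero_right norm_ge_zero order_antisym)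
      then show ?thesis using True by (simp add: g_def Cn_def)
    next
      case False
      then have nc: "norm Cn > 0" by simp
      have p1: "c0 * norm Cn > 0" using nc c0 by simp
      have "ln (c0 * norm Cn) \<le> ln (norm (Cn *v w x))" using b1 p1 by (subst ln_le_cancel_iff) auto
      then have l1: "ln c0 + ln (norm Cn) \<le> g x n" using c0 nc by (simp add: ln_mult g_def Cn_def)
      have "ln (norm (Cn *v w x)) \<le> ln (NN * norm Cn)" using b1 b2 p1 by (subst ln_le_cancel_iff) auto
      then have l2: "g x n \<le> ln NN + ln (norm Cn)" using NN nc by (simp add: ln_mult g_def Cn_def)
      show ?thesis using l1 l2 by (simp add: Cn_def abs_le_iff) linarith
    qed
  qed
  have lyap: "AE x in M. (\<lambda>n. ereal (ln (norm (cocycle T S n x)) / real n)) \<longlonglongrightarrow> l"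
    using assms(7) unfolding top_lyapunov_exponent_def S_def by simp
  have Hae: "AE x in M. x \<in> H"
    using AE_space lyap
  proof eventually_elim
    case (elim x)
    then show ?case unfolding H_def using ereal_bdiff[OF elim(2) gbound[OF elim(1)]] elim(1) by simp
  qed
  have HM: "H \<subseteq> space M" unfolding H_def by auto
  have mH: "measure M H = 1"
  proof -
    have e: "{x\<in>space M. x \<in> H} = H" using HM by auto
    show ?thesis using P.prob_Collect_eq_1[of "\<lambda>x. x \<in> H"] Hae Hs unfolding e by simp
  qed
  have inv: "x \<in> H \<longleftrightarrow> T x \<in> H" if x: "x \<in> space M" for x
  proof -
    have gS: "\<bar>g x (Suc n) - g (T x) n\<bar> \<le> \<bar>ln (\<rho> x)\<bar>" for n
    proof -
      have "cocycle T S (Suc n) x *v w x = \<rho> x *\<^sub>R (cocycle T S n (T x) *v w (T x))"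
        by (subst coc_Suc') (simp add: matrix_vector_mul_assoc[symmetric] rho(2)[OF x] matrix_vector_mult_scaleR)
      then have e: "g x (Suc n) = ln (\<rho> x * norm (cocycle T S n (T x) *v w (T x)))"
        using rho(1)[OF x] by (simp add: g_def)
      show ?thesis
      proof (cases "norm (cocycle T S n (T x) *v w (T x)) = 0")
        case True then show ?thesis unfolding e by (simp add: g_def)
      next
        case False
        then have "norm (cocycle T S n (T x) *v w (T x)) > 0" by simp
        then show ?thesis using rho(1)[OF x] unfolding e by (simp add: g_def ln_mult)
      qed
    qed
    have "x \<in> H \<longleftrightarrow> (\<lambda>n. ereal (g x n / real n)) \<longlonglongrightarrow> l" using x by (simp add: H_def)
    also have "\<dots> \<longleftrightarrow> (\<lambda>n. ereal (g x (Suc n) / real (Suc n))) \<longlonglongrightarrow> l"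
      by (rule filterlim_sequentially_Suc[symmetric])
    also have "\<dots> \<longleftrightarrow> (\<lambda>n. ereal (g x (Suc n) / real n)) \<longlonglongrightarrow> l"
      by (rule ereal_shift1[symmetric])
    also have "\<dots> \<longleftrightarrow> (\<lambda>n. ereal (g (T x) n / real n)) \<longlonglongrightarrow> l"
    proof
      assume h: "(\<lambda>n. ereal (g x (Suc n) / real n)) \<longlonglongrightarrow> l"
      show "(\<lambda>n. ereal (g (T x) n / real n)) \<longlonglongrightarrow> l"
        by (rule ereal_bdiff[OF h, where C="\<bar>ln (\<rho> x)\<bar>"]) (use gS in \<open>simp add: abs_minus_commute\<close>)
    next
      assume h: "(\<lambda>n. ereal (g (T x) n / real n)) \<longlonglongrightarrow> l"
      show "(\<lambda>n. ereal (g x (Suc n) / real n)) \<longlonglongrightarrow> l"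
        by (rule ereal_bdiff[OF h, where C="\<bar>ln (\<rho> x)\<bar>"]) (use gS in simp)
    qed
    also have "\<dots> \<longleftrightarrow> T x \<in> H" using Tsp x by (simp add: H_def)
    finally show ?thesis .
  qed
  have TH: "T ` H = H"
  proof
    show "T ` H \<subseteq> H" using inv HM by auto
    show "H \<subseteq> T ` H"
    proof
      fix y assume y: "y \<in> H"
      then have "y \<in> space M" using HM by auto
      then obtain x where x: "x \<in> space M" "y = T x"
        using bij_betw_imp_surj_on[OF bij] by (metis imageE)
      then have "x \<in> H" using inv y by simp
      then show "y \<in> T ` H" using x by simp
    qed
  qed
  have final: "\<forall>x\<in>H. (\<lambda>n. ereal (ln (norm (cocycle T S n x *v w x)) / real n)) \<longlonglongrightarrow> l"
    unfolding H_def g_def by simp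
  have wposH: "\<forall>x\<in>H. (\<forall>i. w x $ i > 0) \<and> norm (w x) = 1"
    using HM wposv wn unfolding posv_def by auto
  have rhoH: "\<forall>x\<in>H. \<rho> x > 0" "\<forall>x\<in>H. S x *v w x = \<rho> x *\<^sub>R w (T x)" using HM rho by auto
  show ?thesis
    apply (rule exI[of _ H], rule exI[of _ w], rule exI[of _ \<rho>])
    using Hs TH mH measurable_restrict_space1[OF wm] wposH rhoH final unfolding S_def by auto
qed

end
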